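(* Let $N\geq 1$. The following two statements are equivalent. (A) (Matheron's conjecture) For every symmetric $N\times N$ matrix $\gamma$ with zero diagonal, $\pi(\gamma)\in\mathrm{cone}(0;\mathscr{V}_N^* )$ if and only if $\sum_{i,j=1}^N\gamma_{i,j}e_ie_j\leq 0$ for every $e\in\mathbb{Z}^N$ with $\sum_{i=1}^Ne_i=1$. (B) A symmetric $N\times N$ matrix $\rho$ with $\rho_{i,i}=1$ for all $i$ is a unit covariance if and only if $\sum_{i,j=1}^N\rho_{i,j}e_ie_j\geq 1$ for every $e\in\mathsf{E}_N$, where $\mathsf{E}_N=\{e\in\mathbb{Z}^N:\ \sum_i u_ie_i=1\text{ for some }u\in\{-1,1\}^N\}$.
   Context: A unit field on $[N]=\{1,\dots,N\}$ is a random vector $X\in\{-1,1\}^N$ with unit covariance $\rho^X_{i,j}=\mathbf{E}[X_iX_j]$; a matrix is a unit covariance if it is of this form. For a random subset $Y\subseteq[N]$, its covariogram is $\gamma^Y_{i,j}=\frac12\mathbb{P}(1_Y(i)\neq 1_Y(j))$; $\mathscr{V}_N$ is the set of all such covariograms. $\pi$ maps a symmetric matrix to its supra-diagonal array $(\gamma_{i,j})_{1\le i<j\le N}$, and $\mathscr{V}_N^*=\pi(\mathscr{V}_N)$. For a convex set $C$ and a point $x$, $\mathrm{cone}(x;C)$ is the smallest convex cone with apex $x$ containing $C$, i.e. $\{x+t(c-x): t\geq 0, c\in C\}$. *)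

theory Defs
  imports "HOL-Probability.Probability"
begin

text \<open>Indices range over [N] = {1..N}; matrices are functions nat \<Rightarrow> nat \<Rightarrow> real,
  only their values on {1..N} x {1..N} matter. A random vector / random subset is
  represented by its law (a pmf), which is all that covariances/covariograms depend on.\<close>

definition sign_vectors :: "nat \<Rightarrow> (nat \<Rightarrow> int) set" where
  "sign_vectors N = {x. (\<forall>i\<in>{1..N}. x i \<in> {-1, 1}) \<and> (\<forall>i. i \<notin> {1..N} \<longrightarrow> x i = 0)}"

definition unit_field :: "nat \<Rightarrow> (nat \<Rightarrow> int) pmf \<Rightarrow> bool" where
  "unit_field N X \<longleftrightarrow> set_pmf X \<subseteq> sign_vectors N"

definition unit_cov_of :: "(nat \<Rightarrow> int) pmf \<Rightarrow> nat \<Rightarrow> nat \<Rightarrow> real" where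
  "unit_cov_of X i j = measure_pmf.expectation X (\<lambda>x. real_of_int (x i * x j))"

definition unit_covariance :: "nat \<Rightarrow> (nat \<Rightarrow> nat \<Rightarrow> real) \<Rightarrow> bool" where
  "unit_covariance N \<rho> \<longleftrightarrow>
     (\<exists>X. unit_field N X \<and> (\<forall>i\<in>{1..N}. \<forall>j\<in>{1..N}. \<rho> i j = unit_cov_of X i j))"

definition random_subset :: "nat \<Rightarrow> nat set pmf \<Rightarrow> bool" where
  "random_subset N Y \<longleftrightarrow> set_pmf Y \<subseteq> Pow {1..N}"

definition covariogram :: "nat set pmf \<Rightarrow> nat \<Rightarrow> nat \<Rightarrow> real" where
  "covariogram Y i j = 1/2 * measure_pmf.prob Y {A. (i \<in> A) \<noteq> (j \<in> A)}"

definition supra :: "nat \<Rightarrow> (nat \<Rightarrow> nat \<Rightarrow> real) \<Rightarrow> (nat \<times> nat \<Rightarrow> real)" where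
  "supra N \<gamma> = (\<lambda>(i, j). if 1 \<le> i \<and> i < j \<and> j \<le> N then \<gamma> i j else 0)"

definition covariograms :: "nat \<Rightarrow> (nat \<Rightarrow> nat \<Rightarrow> real) set" where
  "covariograms N = {covariogram Y | Y. random_subset N Y}"

definition covariograms_supra :: "nat \<Rightarrow> (nat \<times> nat \<Rightarrow> real) set" where
  "covariograms_supra N = supra N ` covariograms N"

definition cone_at :: "('a \<Rightarrow> real) \<Rightarrow> ('a \<Rightarrow> real) set \<Rightarrow> ('a \<Rightarrow> real) set" where
  "cone_at x C = {(\<lambda>p. x p + t * (c p - x p)) | t c. t \<ge> 0 \<and> c \<in> C}"

definition symmetric_mat :: "nat \<Rightarrow> (nat \<Rightarrow> nat \<Rightarrow> real) \<Rightarrow> bool" where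
  "symmetric_mat N M \<longleftrightarrow> (\<forall>i\<in>{1..N}. \<forall>j\<in>{1..N}. M i j = M j i)"

definition qform :: "nat \<Rightarrow> (nat \<Rightarrow> nat \<Rightarrow> real) \<Rightarrow> (nat \<Rightarrow> int) \<Rightarrow> real" where
  "qform N M e = (\<Sum>i=1..N. \<Sum>j=1..N. M i j * real_of_int (e i) * real_of_int (e j))"

definition E_set :: "nat \<Rightarrow> (nat \<Rightarrow> int) set" where
  "E_set N = {e. \<exists>u. (\<forall>i\<in>{1..N}. u i \<in> {-1, 1}) \<and> (\<Sum>i=1..N. u i * e i) = 1}"

end

theory Submission
  imports Defs "HOL-Analysis.Finite_Function_Topology"
begin


lemma sv_finite: "finite (sign_vectors N)"
proof -
  have "sign_vectors N \<subseteq> {f. \<forall>x. (x \<in> {1..N} \<longrightarrow> f x \<in> {-1,1}) \<and> (x \<notin> {1..N} \<longrightarrow> f x = 0)}"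
    unfolding sign_vectors_def by auto
  thus ?thesis using finite_set_of_finite_funs[of "{1..N}" "{-1,1::int}" 0] finite_subset by blast
qed

lemma prob_as_int: "measure_pmf.prob Y B = (\<integral>A. indicator B A \<partial>measure_pmf Y)"
  by simp

lemma exp_fin:
  assumes "finite A" "set_pmf M \<subseteq> A"
  shows "measure_pmf.expectation M f = (\<Sum>a\<in>A. f a * pmf M a)"
  using assms by (intro integral_measure_pmf_real) auto



definition BF :: "nat \<Rightarrow> (nat \<Rightarrow> nat \<Rightarrow> real) \<Rightarrow> (nat \<Rightarrow> real) \<Rightarrow> (nat \<Rightarrow> real) \<Rightarrow> real" where
  "BF N g a b = (\<Sum>i=1..N. \<Sum>j=1..N. g i j * a i * b j)"

lemma qform_BF: "qform N g e = BF N g (\<lambda>i. real_of_int (e i)) (\<lambda>i. real_of_int (e i))"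
  unfolding qform_def BF_def by simp

lemma BF_sum_left: "finite K \<Longrightarrow> BF N g (\<lambda>i. \<Sum>m\<in>K. z m i) b = (\<Sum>m\<in>K. BF N g (z m) b)"
  unfolding BF_def by (simp add: sum_distrib_left sum_distrib_right sum.swap[of _ K] mult.assoc mult.left_commute)

lemma BF_sum_right: "finite K \<Longrightarrow> BF N g a (\<lambda>i. \<Sum>m\<in>K. z m i) = (\<Sum>m\<in>K. BF N g a (z m))"
  unfolding BF_def by (simp add: sum_distrib_left sum_distrib_right sum.swap[of _ K] mult.assoc mult.left_commute)

lemma BF_diff: "BF N g (\<lambda>i. a i - b i) (\<lambda>i. a i - b i) = BF N g a a - BF N g a b - BF N g b a + BF N g b b"
  unfolding BF_def by (simp add: algebra_simps sum_subtractf sum.distrib)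

lemma BF_cong: "(\<And>i. i \<in> {1..N} \<Longrightarrow> a i = a' i) \<Longrightarrow> (\<And>i. i \<in> {1..N} \<Longrightarrow> b i = b' i) \<Longrightarrow> BF N g a b = BF N g a' b'"
  unfolding BF_def by (intro sum.cong refl) auto

lemma decomp_identity:
  assumes "finite K"
  shows "BF N g (\<lambda>i. \<Sum>m\<in>K. z m i) (\<lambda>i. \<Sum>m\<in>K. z m i)
     = real (card K) * (\<Sum>m\<in>K. BF N g (z m) (z m))
       - (1/2) * (\<Sum>m\<in>K. \<Sum>l\<in>K. BF N g (\<lambda>i. z m i - z l i) (\<lambda>i. z m i - z l i))"
proof -
  have L: "BF N g (\<lambda>i. \<Sum>m\<in>K. z m i) (\<lambda>i. \<Sum>m\<in>K. z m i) = (\<Sum>m\<in>K. \<Sum>l\<in>K. BF N g (z m) (z l))"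
    using assms by (simp add: BF_sum_left BF_sum_right)
  have sw: "(\<Sum>m\<in>K. \<Sum>l\<in>K. BF N g (z l) (z m)) = (\<Sum>m\<in>K. \<Sum>l\<in>K. BF N g (z m) (z l))"
    by (rule sum.swap)
  have "(\<Sum>m\<in>K. \<Sum>l\<in>K. BF N g (\<lambda>i. z m i - z l i) (\<lambda>i. z m i - z l i))
      = (\<Sum>m\<in>K. \<Sum>l\<in>K. BF N g (z m) (z m)) - (\<Sum>m\<in>K. \<Sum>l\<in>K. BF N g (z m) (z l))
        - (\<Sum>m\<in>K. \<Sum>l\<in>K. BF N g (z l) (z m)) + (\<Sum>m\<in>K. \<Sum>l\<in>K. BF N g (z l) (z l))"
    by (simp add: BF_diff sum_subtractf sum.distrib)
  also have "\<dots> = 2 * real (card K) * (\<Sum>m\<in>K. BF N g (z m) (z m)) - 2 * (\<Sum>m\<in>K. \<Sum>l\<in>K. BF N g (z m) (z l))"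
  proof -
    have a: "(\<Sum>m\<in>K. \<Sum>l\<in>K. BF N g (z m) (z m)) = real (card K) * (\<Sum>m\<in>K. BF N g (z m) (z m))"
      by (simp add: sum_distrib_left)
    have b: "(\<Sum>m\<in>K. \<Sum>l\<in>K. BF N g (z l) (z l)) = real (card K) * (\<Sum>m\<in>K. BF N g (z m) (z m))"
      by simp
    show ?thesis unfolding a b sw by simp
  qed
  finally show ?thesis using L by (simp add: field_simps)
qed

lemma BF_bound:
  assumes "\<And>i. i \<in> {1..N} \<Longrightarrow> \<bar>d i\<bar> \<le> R"
  shows "\<bar>BF N g d d\<bar> \<le> (\<Sum>i=1..N. \<Sum>j=1..N. \<bar>g i j\<bar>) * R^2"
proof -
  have "\<bar>BF N g d d\<bar> \<le> (\<Sum>i=1..N. \<Sum>j=1..N. \<bar>g i j * d i * d j\<bar>)"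
    unfolding BF_def by (rule order.trans[OF sum_abs]) (intro sum_mono sum_abs)
  also have "\<dots> \<le> (\<Sum>i=1..N. \<Sum>j=1..N. \<bar>g i j\<bar> * R^2)"
  proof (intro sum_mono)
    fix i j assume i: "i \<in> {1..N}" and j: "j \<in> {1..N}"
    have "\<bar>d i\<bar> * \<bar>d j\<bar> \<le> R * R" using assms[OF i] assms[OF j] by (intro mult_mono) auto
    thus "\<bar>g i j * d i * d j\<bar> \<le> \<bar>g i j\<bar> * R^2"
      by (simp add: abs_mult power2_eq_square mult.assoc mult_left_mono)
  qed
  also have "\<dots> = (\<Sum>i=1..N. \<Sum>j=1..N. \<bar>g i j\<bar>) * R^2" by (simp add: sum_distrib_right)
  finally show ?thesis .
qed

lemma hermite:
  assumes "k > 0"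
  shows "(\<Sum>m<k. (x + int m) div int k) = x"
proof (induction x rule: int_induct[where k=0])
  case base
  have "(\<Sum>m<k. (0 + int m) div int k) = (\<Sum>m<k. 0::int)"
    by (intro sum.cong refl) (simp add: div_pos_pos_trivial)
  thus ?case by simp
next
  case (step1 i)
  define g where "g m = (i + int m) div int k" for m
  have e1: "(\<Sum>m<Suc k. g m) = g 0 + (\<Sum>m<k. g (Suc m))" by (rule sum.lessThan_Suc_shift)
  have e2: "(\<Sum>m<Suc k. g m) = (\<Sum>m<k. g m) + g k" by simp
  have gk: "g k = g 0 + 1" using assms unfolding g_def by simp
  have "(\<Sum>m<k. (i + 1 + int m) div int k) = (\<Sum>m<k. g (Suc m))"
    unfolding g_def by (intro sum.cong refl) (simp add: algebra_simps)
  also have "\<dots> = (\<Sum>m<k. g m) + 1" using e1 e2 gk by simp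
  finally show ?case using step1 unfolding g_def by simp
next
  case (step2 i)
  define g where "g m = (i - 1 + int m) div int k" for m
  have e1: "(\<Sum>m<Suc k. g m) = g 0 + (\<Sum>m<k. g (Suc m))" by (rule sum.lessThan_Suc_shift)
  have e2: "(\<Sum>m<Suc k. g m) = (\<Sum>m<k. g m) + g k" by simp
  have gk: "g k = g 0 + 1" using assms unfolding g_def by simp
  have "(\<Sum>m<k. (i + int m) div int k) = (\<Sum>m<k. g (Suc m))"
    unfolding g_def by (intro sum.cong refl) (simp add: algebra_simps)
  also have "\<dots> = (\<Sum>m<k. g m) + 1" using e1 e2 gk by simp
  finally have "(\<Sum>m<k. (i - 1 + int m) div int k) = i - 1" using step2 unfolding g_def by simp
  thus ?case .
qed

lemma div_close:
  assumes "m < k" "l < k"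
  shows "(x + int m) div int k \<le> (x + int l) div int k + 1"
proof -
  have "(x + int m) div int k \<le> (x + int l + int k) div int k"
    using assms by (intro zdiv_mono1) auto
  also have "\<dots> = (x + int l) div int k + 1" using assms by simp
  finally show ?thesis .
qed



lemma main_bound:
  assumes N1: "N \<ge> 1"
  and H: "\<forall>e::nat\<Rightarrow>int. (\<Sum>i=1..N. e i) = 1 \<longrightarrow> qform N g e \<le> 0"
  and ke: "(\<Sum>i=1..N. e i) = k" and k1: "k \<ge> 1"
  shows "qform N g e \<le> 1/2 * (real_of_int k)^2 * ((\<Sum>i=1..N. \<Sum>j=1..N. \<bar>g i j\<bar>) * (real N + 1)^2)"
proof -
  define C where "C = (\<Sum>i=1..N. \<Sum>j=1..N. \<bar>g i j\<bar>) * (real N + 1)^2"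
  define kk where "kk = nat k"
  have kkk: "int kk = k" using k1 unfolding kk_def by simp
  have kk0: "kk > 0" using k1 unfolding kk_def by simp
  define z where "z m i = (e i + int m) div k" for m i
  define s where "s m = (\<Sum>i=1..N. z m i)" for m
  define z' where "z' m i = z m i + (if i = 1 then 1 - s m else 0)" for m i
  have N1': "(1::nat) \<in> {1..N}" using N1 by simp
  have sum1: "(\<Sum>i=1..N. z' m i) = 1" for m
  proof -
    have "(\<Sum>i=1..N. z' m i) = s m + (\<Sum>i=1..N. (if i = 1 then 1 - s m else 0))"
      unfolding z'_def s_def by (simp add: sum.distrib)
    also have "(\<Sum>i=1..N. (if i = 1 then 1 - s m else 0)) = 1 - s m"
      using N1' by (simp add: sum.delta)
    finally show ?thesis by simp
  qed
  have Qle: "qform N g (z' m) \<le> 0" for m using H sum1 by blast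
  have hz: "(\<Sum>m<kk. z m i) = e i" for i
    unfolding z_def using hermite[OF kk0, of "e i"] kkk by simp
  have ss: "(\<Sum>m<kk. s m) = k"
  proof -
    have "(\<Sum>m<kk. s m) = (\<Sum>i=1..N. \<Sum>m<kk. z m i)" unfolding s_def by (rule sum.swap)
    thus ?thesis using hz ke by simp
  qed
  have sumz: "(\<Sum>m<kk. z' m i) = e i" for i
  proof -
    have "(\<Sum>m<kk. z' m i) = (\<Sum>m<kk. z m i) + (\<Sum>m<kk. (if i = 1 then 1 - s m else 0))"
      unfolding z'_def by (simp add: sum.distrib)
    also have "(\<Sum>m<kk. (if i = 1 then 1 - s m else 0)) = 0"
      using ss kkk by (cases "i = 1") (simp_all add: sum_subtractf)
    finally show ?thesis using hz by simp
  qed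
  have dz: "\<bar>z m i - z l i\<bar> \<le> 1" if "m < kk" "l < kk" for m l i
    using div_close[of m kk l "e i"] div_close[of l kk m "e i"] that kkk unfolding z_def by auto
  have ds: "\<bar>s m - s l\<bar> \<le> int N" if "m < kk" "l < kk" for m l
  proof -
    have "\<bar>s m - s l\<bar> = \<bar>\<Sum>i=1..N. z m i - z l i\<bar>" unfolding s_def by (simp add: sum_subtractf)
    also have "\<dots> \<le> (\<Sum>i=1..N. \<bar>z m i - z l i\<bar>)" by (rule sum_abs)
    also have "\<dots> \<le> (\<Sum>i=1..N. 1)" using dz[OF that] by (intro sum_mono) auto
    finally show ?thesis by simp
  qed
  have dz': "\<bar>real_of_int (z' m i) - real_of_int (z' l i)\<bar> \<le> real N + 1" if "m < kk" "l < kk" for m l i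
  proof -
    have "\<bar>z' m i - z' l i\<bar> \<le> \<bar>z m i - z l i\<bar> + \<bar>s m - s l\<bar>"
      unfolding z'_def by auto
    also have "\<dots> \<le> 1 + int N" using dz[OF that, of i] ds[OF that] by linarith
    finally have "\<bar>z' m i - z' l i\<bar> \<le> 1 + int N" .
    hence "real_of_int \<bar>z' m i - z' l i\<bar> \<le> real_of_int (1 + int N)" by (rule of_int_le_iff[THEN iffD2])
    thus ?thesis by simp
  qed
  define Z where "Z m i = real_of_int (z' m i)" for m i
  have "qform N g e = BF N g (\<lambda>i. \<Sum>m\<in>{..<kk}. Z m i) (\<lambda>i. \<Sum>m\<in>{..<kk}. Z m i)"
    unfolding qform_BF Z_def by (intro BF_cong) (simp_all add: sumz flip: of_int_sum)
  also have "\<dots> = real (card {..<kk}) * (\<Sum>m\<in>{..<kk}. BF N g (Z m) (Z m))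
       - (1/2) * (\<Sum>m\<in>{..<kk}. \<Sum>l\<in>{..<kk}. BF N g (\<lambda>i. Z m i - Z l i) (\<lambda>i. Z m i - Z l i))"
    by (rule decomp_identity) simp
  also have "\<dots> \<le> 0 + (1/2) * (\<Sum>m\<in>{..<kk}. \<Sum>l\<in>{..<kk}. C)"
  proof -
    have h1: "(\<Sum>m\<in>{..<kk}. BF N g (Z m) (Z m)) \<le> 0"
      using Qle unfolding Z_def qform_BF by (intro sum_nonpos) auto
    have "(\<Sum>m\<in>{..<kk}. \<Sum>l\<in>{..<kk}. - BF N g (\<lambda>i. Z m i - Z l i) (\<lambda>i. Z m i - Z l i)) \<le> (\<Sum>m\<in>{..<kk}. \<Sum>l\<in>{..<kk}. C)"
    proof (intro sum_mono)
      fix m l assume "m \<in> {..<kk}" "l \<in> {..<kk}"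
      hence "\<bar>BF N g (\<lambda>i. Z m i - Z l i) (\<lambda>i. Z m i - Z l i)\<bar> \<le> C"
        unfolding C_def Z_def by (intro BF_bound dz') auto
      thus "- BF N g (\<lambda>i. Z m i - Z l i) (\<lambda>i. Z m i - Z l i) \<le> C" by simp
    qed
    hence h2: "- (\<Sum>m\<in>{..<kk}. \<Sum>l\<in>{..<kk}. BF N g (\<lambda>i. Z m i - Z l i) (\<lambda>i. Z m i - Z l i)) \<le> (\<Sum>m\<in>{..<kk}. \<Sum>l\<in>{..<kk}. C)"
      by (simp add: sum_negf)
    have h1': "real (card {..<kk}) * (\<Sum>m\<in>{..<kk}. BF N g (Z m) (Z m)) \<le> 0"
      using h1 by (simp add: mult_nonneg_nonpos)
    show ?thesis using h1' h2 by linarith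
  qed
  also have "\<dots> = 1/2 * (real_of_int k)^2 * C"
  proof -
    have "(\<Sum>m\<in>{..<kk}. \<Sum>l\<in>{..<kk}. C) = real kk * real kk * C" by simp
    moreover have "real kk = real_of_int k" using kkk by (metis of_int_of_nat_eq)
    ultimately show ?thesis by (simp add: power2_eq_square)
  qed
  finally show ?thesis unfolding C_def .
qed



lemma parity:
  assumes "\<forall>i\<in>{1..N}. u i \<in> {-1, 1::int}"
  shows "even ((\<Sum>i=1..N. u i * e i) - (\<Sum>i=1..N. e i))"
proof -
  have "(\<Sum>i=1..N. u i * e i) - (\<Sum>i=1..N. e i) = (\<Sum>i=1..N. (u i - 1) * e i)"
    by (simp add: sum_subtractf algebra_simps)
  moreover have "even (\<Sum>i=1..N. (u i - 1) * e i)"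
  proof (intro dvd_sum)
    fix i assume "i \<in> {1..N}"
    hence "u i = -1 \<or> u i = 1" using assms by auto
    thus "even ((u i - 1) * e i)" by auto
  qed
  ultimately show ?thesis by simp
qed

lemma odd_sq: "odd (b::int) \<Longrightarrow> 1 \<le> b^2"
proof -
  assume "odd b" hence "b \<noteq> 0" by auto
  hence "1 \<le> \<bar>b\<bar>" by simp
  hence "1 * 1 \<le> \<bar>b\<bar> * \<bar>b\<bar>" by (intro mult_mono) auto
  thus ?thesis by (simp add: power2_eq_square abs_mult[symmetric])
qed

lemma E_odd: "e \<in> E_set N \<Longrightarrow> odd (\<Sum>i=1..N. e i)"
proof -
  assume "e \<in> E_set N"
  then obtain u where u: "\<forall>i\<in>{1..N}. u i \<in> {-1, 1}" "(\<Sum>i=1..N. u i * e i) = 1"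
    unfolding E_set_def by auto
  from parity[OF u(1), of e] u(2) show ?thesis by simp
qed

lemma sign_odd:
  assumes "\<forall>i\<in>{1..N}. x i \<in> {-1, 1::int}" "odd (\<Sum>i=1..N. e i)"
  shows "odd (\<Sum>i=1..N. x i * e i)"
  using parity[OF assms(1), of e] assms(2) by simp

lemma qform_neg: "qform N g (\<lambda>i. - e i) = qform N g e"
  unfolding qform_def by simp

lemma qform_affine:
  "qform N (\<lambda>i j. a - s * g i j) e = a * (real_of_int (\<Sum>i=1..N. e i))^2 - s * qform N g e"
  unfolding qform_def
  by (simp add: power2_eq_square sum_product sum_subtractf sum_distrib_left algebra_simps)

lemma qform_sign:
  "qform N (\<lambda>i j. real_of_int (x i * x j)) e = (real_of_int (\<Sum>i=1..N. x i * e i))^2"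
  unfolding qform_def
  by (simp add: power2_eq_square sum_product algebra_simps)

lemma swap3: "(\<Sum>i\<in>I. \<Sum>j\<in>J. \<Sum>a\<in>A. f i j a) = (\<Sum>a\<in>A. \<Sum>i\<in>I. \<Sum>j\<in>J. f i j a)"
proof -
  have "(\<Sum>i\<in>I. \<Sum>j\<in>J. \<Sum>a\<in>A. f i j a) = (\<Sum>i\<in>I. \<Sum>a\<in>A. \<Sum>j\<in>J. f i j a)"
    by (intro sum.cong refl) (rule sum.swap)
  also have "\<dots> = (\<Sum>a\<in>A. \<Sum>i\<in>I. \<Sum>j\<in>J. f i j a)" by (rule sum.swap)
  finally show ?thesis .
qed

definition sv :: "nat \<Rightarrow> nat set \<Rightarrow> nat \<Rightarrow> int" where
  "sv N A i = (if i \<in> {1..N} then (if i \<in> A then 1 else -1) else 0)"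

lemma sv_in: "sv N A \<in> sign_vectors N"
  unfolding sv_def sign_vectors_def by auto

lemma sv_ind:
  assumes "i \<in> {1..N}" "j \<in> {1..N}"
  shows "indicator {A. (i \<in> A) \<noteq> (j \<in> A)} A = (1 - real_of_int (sv N A i * sv N A j)) / 2"
  using assms unfolding sv_def by (auto simp: indicator_def)

lemma cov_sum:
  assumes "random_subset N Y"
  shows "covariogram Y i j = 1/2 * (\<Sum>A\<in>Pow {1..N}. indicator {A. (i \<in> A) \<noteq> (j \<in> A)} A * pmf Y A)"
proof -
  have "measure_pmf.prob Y {A. (i \<in> A) \<noteq> (j \<in> A)} = (\<Sum>A\<in>Pow {1..N}. indicator {A. (i \<in> A) \<noteq> (j \<in> A)} A * pmf Y A)"
    using assms unfolding random_subset_def by (subst prob_as_int, intro exp_fin) auto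
  thus ?thesis unfolding covariogram_def by simp
qed

lemma cov_lin:
  assumes "random_subset N Y"
  shows "(\<Sum>i=1..N. \<Sum>j=1..N. W i j * covariogram Y i j)
    = (\<Sum>A\<in>Pow {1..N}. pmf Y A * ((\<Sum>i=1..N. \<Sum>j=1..N. W i j * (1 - real_of_int (sv N A i * sv N A j))) / 4))"
proof -
  have "(\<Sum>i=1..N. \<Sum>j=1..N. W i j * covariogram Y i j)
     = (\<Sum>i=1..N. \<Sum>j=1..N. \<Sum>A\<in>Pow {1..N}. pmf Y A * (W i j * (1 - real_of_int (sv N A i * sv N A j)) / 4))"
  proof (intro sum.cong refl)
    fix i j assume i: "i \<in> {1..N}" and j: "j \<in> {1..N}"
    have "covariogram Y i j = 1/2 * (\<Sum>A\<in>Pow {1..N}. (1 - real_of_int (sv N A i * sv N A j)) / 2 * pmf Y A)"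
    proof -
      have "(\<Sum>A\<in>Pow {1..N}. indicator {A. (i \<in> A) \<noteq> (j \<in> A)} A * pmf Y A)
          = (\<Sum>A\<in>Pow {1..N}. (1 - real_of_int (sv N A i * sv N A j)) / 2 * pmf Y A)"
        by (intro sum.cong refl) (simp only: sv_ind[OF i j])
      thus ?thesis unfolding cov_sum[OF assms] by simp
    qed
    also have "\<dots> = (\<Sum>A\<in>Pow {1..N}. pmf Y A * ((1 - real_of_int (sv N A i * sv N A j)) / 4))"
      by (simp add: sum_distrib_left mult.commute)
    finally show "W i j * covariogram Y i j = (\<Sum>A\<in>Pow {1..N}. pmf Y A * (W i j * (1 - real_of_int (sv N A i * sv N A j)) / 4))"
      by (simp add: sum_distrib_left algebra_simps)
  qed
  also have "\<dots> = (\<Sum>A\<in>Pow {1..N}. \<Sum>i=1..N. \<Sum>j=1..N. pmf Y A * (W i j * (1 - real_of_int (sv N A i * sv N A j)) / 4))"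
    by (rule swap3)
  also have "\<dots> = (\<Sum>A\<in>Pow {1..N}. pmf Y A * ((\<Sum>i=1..N. \<Sum>j=1..N. W i j * (1 - real_of_int (sv N A i * sv N A j))) / 4))"
    by (simp add: sum_distrib_left sum_divide_distrib)
  finally show ?thesis .
qed

lemma ucov_lin:
  assumes "unit_field N X"
  shows "(\<Sum>i=1..N. \<Sum>j=1..N. W i j * unit_cov_of X i j)
    = (\<Sum>x\<in>sign_vectors N. pmf X x * (\<Sum>i=1..N. \<Sum>j=1..N. W i j * real_of_int (x i * x j)))"
proof -
  have uc: "unit_cov_of X i j = (\<Sum>x\<in>sign_vectors N. real_of_int (x i * x j) * pmf X x)" for i j
    using assms unfolding unit_field_def unit_cov_of_def by (intro exp_fin sv_finite) auto
  have "(\<Sum>i=1..N. \<Sum>j=1..N. W i j * unit_cov_of X i j)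
     = (\<Sum>i=1..N. \<Sum>j=1..N. \<Sum>x\<in>sign_vectors N. pmf X x * (W i j * real_of_int (x i * x j)))"
    by (simp add: uc sum_distrib_left algebra_simps)
  also have "\<dots> = (\<Sum>x\<in>sign_vectors N. \<Sum>i=1..N. \<Sum>j=1..N. pmf X x * (W i j * real_of_int (x i * x j)))"
    by (rule swap3)
  also have "\<dots> = (\<Sum>x\<in>sign_vectors N. pmf X x * (\<Sum>i=1..N. \<Sum>j=1..N. W i j * real_of_int (x i * x j)))"
    by (simp add: sum_distrib_left)
  finally show ?thesis .
qed

lemma pmf_sum1_uf: "unit_field N X \<Longrightarrow> (\<Sum>x\<in>sign_vectors N. pmf X x) = 1"
  unfolding unit_field_def by (intro sum_pmf_eq_1 sv_finite)

lemma pmf_sum1_rs: "random_subset N Y \<Longrightarrow> (\<Sum>A\<in>Pow {1..N}. pmf Y A) = 1"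
  unfolding random_subset_def by (intro sum_pmf_eq_1) auto



lemma qform_W: "qform N g e = (\<Sum>i=1..N. \<Sum>j=1..N. (real_of_int (e i) * real_of_int (e j)) * g i j)"
  unfolding qform_def by (simp add: algebra_simps)

lemma sq_inner:
  fixes e x :: "nat \<Rightarrow> int"
  shows "(\<Sum>i=1..N. \<Sum>j=1..N. (real_of_int (e i) * real_of_int (e j)) * real_of_int (x i * x j))
    = (real_of_int (\<Sum>i=1..N. x i * e i))^2"
  using qform_sign[of N x e] unfolding qform_W by simp

lemma sq_inner2:
  fixes e x :: "nat \<Rightarrow> int"
  shows "(\<Sum>i=1..N. \<Sum>j=1..N. (real_of_int (e i) * real_of_int (e j)) * (1 - real_of_int (x i * x j)))
    = (real_of_int (\<Sum>i=1..N. e i))^2 - (real_of_int (\<Sum>i=1..N. x i * e i))^2"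
  using qform_affine[of N 1 1 "\<lambda>i j. real_of_int (x i * x j)" e] qform_sign[of N x e] unfolding qform_W by simp

lemma B_fwd:
  assumes "unit_covariance N \<rho>" "e \<in> E_set N"
  shows "1 \<le> qform N \<rho> e"
proof -
  obtain X where X: "unit_field N X" "\<forall>i\<in>{1..N}. \<forall>j\<in>{1..N}. \<rho> i j = unit_cov_of X i j"
    using assms(1) unfolding unit_covariance_def by auto
  have "qform N \<rho> e = (\<Sum>i=1..N. \<Sum>j=1..N. (real_of_int (e i) * real_of_int (e j)) * unit_cov_of X i j)"
    unfolding qform_W using X(2) by (intro sum.cong refl) auto
  also have "\<dots> = (\<Sum>x\<in>sign_vectors N. pmf X x * (real_of_int (\<Sum>i=1..N. x i * e i))^2)"
    unfolding ucov_lin[OF X(1)] sq_inner ..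
  also have "\<dots> \<ge> (\<Sum>x\<in>sign_vectors N. pmf X x * 1)"
  proof (intro sum_mono mult_left_mono)
    fix x assume "x \<in> sign_vectors N"
    hence "\<forall>i\<in>{1..N}. x i \<in> {-1, 1}" unfolding sign_vectors_def by auto
    from sign_odd[OF this E_odd[OF assms(2)]] have "1 \<le> (\<Sum>i=1..N. x i * e i)^2" by (rule odd_sq)
    thus "1 \<le> (real_of_int (\<Sum>i=1..N. x i * e i))^2"
      by (metis of_int_1_le_iff of_int_power)
  qed simp
  finally show ?thesis using pmf_sum1_uf[OF X(1)] by simp
qed

lemma cov_sym: "covariogram Y i j = covariogram Y j i"
  unfolding covariogram_def by (metis (mono_tags, lifting))

lemma cov_diag: "covariogram Y i i = 0"
  unfolding covariogram_def by simp

lemma cone_entries: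
  assumes "supra N g \<in> cone_at (\<lambda>_. 0) (covariograms_supra N)" "symmetric_mat N g" "\<forall>i\<in>{1..N}. g i i = 0"
  shows "\<exists>t Y. t \<ge> 0 \<and> random_subset N Y \<and> (\<forall>i\<in>{1..N}. \<forall>j\<in>{1..N}. g i j = t * covariogram Y i j)"
proof -
  obtain t Y where tY: "t \<ge> 0" "random_subset N Y"
    "supra N g = (\<lambda>p. 0 + t * (supra N (covariogram Y) p - 0))"
    using assms(1) unfolding cone_at_def covariograms_supra_def covariograms_def by auto
  have lt: "g i j = t * covariogram Y i j" if "1 \<le> i" "i < j" "j \<le> N" for i j
    using fun_cong[OF tY(3), of "(i,j)"] that unfolding supra_def by simp
  have "g i j = t * covariogram Y i j" if "i \<in> {1..N}" "j \<in> {1..N}" for i j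
  proof (cases i j rule: linorder_cases)
    case less thus ?thesis using lt that by auto
  next
    case equal thus ?thesis using assms(3) that by (simp add: cov_diag)
  next
    case greater
    hence "g j i = t * covariogram Y j i" using lt that by auto
    thus ?thesis using assms(2) that unfolding symmetric_mat_def by (simp add: cov_sym)
  qed
  thus ?thesis using tY by blast
qed

lemma A_fwd:
  assumes "supra N g \<in> cone_at (\<lambda>_. 0) (covariograms_supra N)" "symmetric_mat N g" "\<forall>i\<in>{1..N}. g i i = 0"
    and "(\<Sum>i=1..N. e i) = 1"
  shows "qform N g e \<le> 0"
proof -
  obtain t Y where tY: "t \<ge> 0" "random_subset N Y" "\<forall>i\<in>{1..N}. \<forall>j\<in>{1..N}. g i j = t * covariogram Y i j"
    using cone_entries[OF assms(1-3)] by blast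
  have "qform N g e = t * (\<Sum>i=1..N. \<Sum>j=1..N. (real_of_int (e i) * real_of_int (e j)) * covariogram Y i j)"
    unfolding qform_W sum_distrib_left using tY(3) by (intro sum.cong refl) auto
  also have "(\<Sum>i=1..N. \<Sum>j=1..N. (real_of_int (e i) * real_of_int (e j)) * covariogram Y i j) \<le> 0"
    unfolding cov_lin[OF tY(2)] sq_inner2
  proof (intro sum_nonpos mult_nonneg_nonpos)
    fix A :: "nat set"
    have "\<forall>i\<in>{1..N}. sv N A i \<in> {-1,1}" unfolding sv_def by auto
    from sign_odd[OF this] assms(4) have "1 \<le> (\<Sum>i=1..N. sv N A i * e i)^2" by (intro odd_sq) simp
    hence "1 \<le> (real_of_int (\<Sum>i=1..N. sv N A i * e i))^2" by (metis of_int_1_le_iff of_int_power)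
    thus "((real_of_int (\<Sum>i=1..N. e i))\<^sup>2 - (real_of_int (\<Sum>i=1..N. sv N A i * e i))\<^sup>2) / 4 \<le> 0"
      using assms(4) by simp
  qed simp
  hence "t * (\<Sum>i=1..N. \<Sum>j=1..N. (real_of_int (e i) * real_of_int (e j)) * covariogram Y i j) \<le> 0"
    using tY(1) by (simp add: mult_nonneg_nonpos)
  finally show ?thesis .
qed



lemma BA_rev:
  assumes N1: "N \<ge> 1"
  and HB: "\<And>\<rho>. symmetric_mat N \<rho> \<Longrightarrow> (\<forall>i\<in>{1..N}. \<rho> i i = 1) \<Longrightarrow> (\<forall>e\<in>E_set N. qform N \<rho> e \<ge> 1) \<Longrightarrow> unit_covariance N \<rho>"
  and sym: "symmetric_mat N g" and d0: "\<forall>i\<in>{1..N}. g i i = 0"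
  and H: "\<forall>e::nat\<Rightarrow>int. (\<Sum>i=1..N. e i) = 1 \<longrightarrow> qform N g e \<le> 0"
  shows "supra N g \<in> cone_at (\<lambda>_. 0) (covariograms_supra N)"
proof -
  define C where "C = (\<Sum>i=1..N. \<Sum>j=1..N. \<bar>g i j\<bar>) * (real N + 1)^2"
  have C0: "C \<ge> 0" unfolding C_def by (intro mult_nonneg_nonneg sum_nonneg) auto
  define s where "s = 1 / (C + 1)"
  have s0: "s > 0" unfolding s_def using C0 by simp
  have sC: "s * C \<le> 1" unfolding s_def using C0 by (simp add: field_simps)
  define \<rho> where "\<rho> i j = 1 - s * g i j" for i j
  have bnd: "qform N g e \<le> 1/2 * (real_of_int (\<Sum>i=1..N. e i))^2 * C" if "(\<Sum>i=1..N. e i) \<noteq> 0" for e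
  proof (cases "(\<Sum>i=1..N. e i) \<ge> 1")
    case True thus ?thesis using main_bound[OF N1 H refl True] unfolding C_def by simp
  next
    case False
    hence "(\<Sum>i=1..N. - e i) \<ge> 1" using that by (simp add: sum_negf)
    from main_bound[OF N1 H refl this] show ?thesis unfolding C_def qform_neg by (simp add: sum_negf)
  qed
  have cond: "\<forall>e\<in>E_set N. qform N \<rho> e \<ge> 1"
  proof
    fix e assume "e \<in> E_set N"
    hence odd: "odd (\<Sum>i=1..N. e i)" by (rule E_odd)
    define k where "k = (\<Sum>i=1..N. e i)"
    have qr: "qform N \<rho> e = (real_of_int k)^2 - s * qform N g e"
      unfolding \<rho>_def k_def using qform_affine[of N 1 s g e] by simp
    have "k \<noteq> 0" using odd unfolding k_def[symmetric] by auto
    then consider "k = 1" | "k = -1" | "k \<ge> 2 \<or> k \<le> -2" by linarith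
    thus "qform N \<rho> e \<ge> 1"
    proof cases
      case 1
      hence "qform N g e \<le> 0" using H k_def by auto
      thus ?thesis using qr 1 s0 by (simp add: mult_nonneg_nonpos)
    next
      case 2
      hence "(\<Sum>i=1..N. - e i) = 1" unfolding k_def by (simp add: sum_negf)
      hence "qform N g e \<le> 0" using H qform_neg[of N g e] by metis
      thus ?thesis using qr 2 s0 by (simp add: mult_nonneg_nonpos)
    next
      case 3
      have k4: "(real_of_int k)^2 \<ge> 4"
      proof -
        have "\<bar>real_of_int k\<bar> \<ge> 2" using 3 by auto
        hence "2 * 2 \<le> \<bar>real_of_int k\<bar> * \<bar>real_of_int k\<bar>" by (intro mult_mono) auto
        thus ?thesis by (simp add: power2_eq_square)
      qed
      have "qform N g e \<le> 1/2 * (real_of_int k)^2 * C" using bnd[of e] 3 unfolding k_def by auto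
      hence "s * qform N g e \<le> s * (1/2 * (real_of_int k)^2 * C)" using s0 by (simp add: mult_left_mono)
      also have "\<dots> = 1/2 * (real_of_int k)^2 * (s * C)" by simp
      also have "\<dots> \<le> 1/2 * (real_of_int k)^2 * 1" using sC by (intro mult_left_mono) auto
      finally show ?thesis using qr k4 by simp
    qed
  qed
  have symr: "symmetric_mat N \<rho>" using sym unfolding symmetric_mat_def \<rho>_def by auto
  have dr: "\<forall>i\<in>{1..N}. \<rho> i i = 1" using d0 unfolding \<rho>_def by auto
  obtain X where X: "unit_field N X" "\<forall>i\<in>{1..N}. \<forall>j\<in>{1..N}. \<rho> i j = unit_cov_of X i j"
    using HB[OF symr dr cond] unfolding unit_covariance_def by auto
  define f where "f x = {i. x i = (1::int)}" for x :: "nat \<Rightarrow> int"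
  define Y where "Y = map_pmf f X"
  have rsY: "random_subset N Y"
    using X(1) unfolding random_subset_def unit_field_def Y_def f_def sign_vectors_def
    by (force simp: set_map_pmf)
  have covY: "covariogram Y i j = (1 - \<rho> i j) / 4" if i: "i \<in> {1..N}" and j: "j \<in> {1..N}" for i j
  proof -
    define B where "B = {x::nat\<Rightarrow>int. (x i = 1) \<noteq> (x j = 1)}"
    have pre: "f -` {A. (i \<in> A) \<noteq> (j \<in> A)} = B" unfolding f_def B_def by auto
    have pB: "measure_pmf.prob X B = (\<Sum>x\<in>sign_vectors N. indicator B x * pmf X x)"
      using X(1) unfolding unit_field_def by (subst prob_as_int, intro exp_fin sv_finite) auto
    have uc: "unit_cov_of X i j = (\<Sum>x\<in>sign_vectors N. real_of_int (x i * x j) * pmf X x)"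
      using X(1) unfolding unit_field_def unit_cov_of_def by (intro exp_fin sv_finite) auto
    have ind: "indicator B x = (1 - real_of_int (x i * x j)) / 2" if "x \<in> sign_vectors N" for x
    proof -
      have "x i \<in> {-1,1}" "x j \<in> {-1,1}" using that i j unfolding sign_vectors_def by auto
      thus ?thesis unfolding B_def by (auto simp: indicator_def)
    qed
    have "covariogram Y i j = 1/2 * (\<Sum>x\<in>sign_vectors N. (1 - real_of_int (x i * x j)) / 2 * pmf X x)"
      unfolding covariogram_def Y_def measure_map_pmf pre pB using ind by (intro arg_cong[where f="\<lambda>a. 1/2 * a"] sum.cong refl) auto
    also have "\<dots> = 1/4 * ((\<Sum>x\<in>sign_vectors N. pmf X x) - (\<Sum>x\<in>sign_vectors N. real_of_int (x i * x j) * pmf X x))"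
    proof -
      have "(\<Sum>x\<in>sign_vectors N. (1 - real_of_int (x i * x j)) / 2 * pmf X x)
          = (\<Sum>x\<in>sign_vectors N. (pmf X x - real_of_int (x i * x j) * pmf X x) / 2)"
        by (intro sum.cong refl) (simp add: algebra_simps)
      also have "\<dots> = ((\<Sum>x\<in>sign_vectors N. pmf X x) - (\<Sum>x\<in>sign_vectors N. real_of_int (x i * x j) * pmf X x)) / 2"
        by (simp only: sum_divide_distrib[symmetric] sum_subtractf)
      finally show ?thesis by simp
    qed
    also have "\<dots> = (1 - \<rho> i j) / 4" using pmf_sum1_uf[OF X(1)] uc X(2) i j by simp
    finally show ?thesis .
  qed
  define t where "t = 4 / s"
  have gt: "g i j = t * covariogram Y i j" if "i \<in> {1..N}" "j \<in> {1..N}" for i j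
    unfolding covY[OF that] t_def \<rho>_def using s0 by (simp add: field_simps)
  have "supra N g = (\<lambda>p. 0 + t * (supra N (covariogram Y) p - 0))"
    unfolding supra_def using gt by (auto simp: fun_eq_iff)
  moreover have "supra N (covariogram Y) \<in> covariograms_supra N"
    unfolding covariograms_supra_def covariograms_def using rsY by auto
  moreover have "t \<ge> 0" unfolding t_def using s0 by simp
  ultimately show ?thesis unfolding cone_at_def by blast
qed



lemma lookup_scaleR_pm: "Poly_Mapping.lookup (r *\<^sub>R (p :: 'a \<Rightarrow>\<^sub>0 real)) k = r * Poly_Mapping.lookup p k"
proof -
  have "finite {i. r *\<^sub>R Poly_Mapping.lookup p i \<noteq> 0}"
    by (rule finite_subset[OF _ finite_keys[of p]]) (auto simp: in_keys_iff)
  thus ?thesis unfolding scaleR_poly_mapping_def by simp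
qed

lemma norm_pm: "norm (p :: 'a \<Rightarrow>\<^sub>0 real) = (\<Sum>n\<in>Poly_Mapping.keys p. \<bar>Poly_Mapping.lookup p n\<bar>)"
  by (simp add: norm_poly_mapping_def dist_poly_mapping_def dist_real_def)

lemma lookup_le_norm: "\<bar>Poly_Mapping.lookup (p :: 'a \<Rightarrow>\<^sub>0 real) k\<bar> \<le> norm p"
proof (cases "k \<in> Poly_Mapping.keys p")
  case True
  thus ?thesis unfolding norm_pm by (intro member_le_sum) auto
next
  case False
  hence "Poly_Mapping.lookup p k = 0" by (simp add: in_keys_iff)
  thus ?thesis by simp
qed

lemma lookup_bl: "bounded_linear (\<lambda>p :: 'a \<Rightarrow>\<^sub>0 real. Poly_Mapping.lookup p k)"
  by (rule bounded_linear_intro[where K=1]) (auto simp: lookup_add lookup_scaleR_pm lookup_le_norm)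

lemma lookup_cont: "continuous_on S (\<lambda>p :: 'a \<Rightarrow>\<^sub>0 real. Poly_Mapping.lookup p k)"
  by (rule linear_continuous_on[OF lookup_bl])

definition phi :: "nat \<Rightarrow> (nat \<Rightarrow> nat \<Rightarrow> real) \<Rightarrow> ((nat \<times> nat) \<Rightarrow>\<^sub>0 real) \<Rightarrow> real" where
  "phi N \<rho> p = (\<Sum>i=1..N. \<Sum>j=1..N. (Poly_Mapping.lookup p (i,j) - \<rho> i j)^2)"

lemma phi_cont: "continuous_on S (phi N \<rho>)"
  unfolding phi_def by (intro continuous_intros lookup_cont)

lemma var_ineq:
  assumes "convex K" "p \<in> K" "y \<in> K" "\<forall>z\<in>K. phi N \<rho> p \<le> phi N \<rho> z"
  shows "(\<Sum>i=1..N. \<Sum>j=1..N. (Poly_Mapping.lookup p (i,j) - \<rho> i j) * (Poly_Mapping.lookup y (i,j) - Poly_Mapping.lookup p (i,j))) \<ge> 0"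
proof (rule ccontr)
  define A where "A = (\<Sum>i=1..N. \<Sum>j=1..N. (Poly_Mapping.lookup p (i,j) - \<rho> i j) * (Poly_Mapping.lookup y (i,j) - Poly_Mapping.lookup p (i,j)))"
  define B where "B = (\<Sum>i=1..N. \<Sum>j=1..N. (Poly_Mapping.lookup y (i,j) - Poly_Mapping.lookup p (i,j))^2)"
  assume "\<not> A \<ge> 0"
  hence A0: "A < 0" unfolding A_def by simp
  have B0: "B \<ge> 0" unfolding B_def by (intro sum_nonneg) auto
  have key: "phi N \<rho> ((1 - t) *\<^sub>R p + t *\<^sub>R y) = phi N \<rho> p + 2 * t * A + t^2 * B" for t
  proof -
    have "phi N \<rho> ((1 - t) *\<^sub>R p + t *\<^sub>R y) = (\<Sum>i=1..N. \<Sum>j=1..N. ((Poly_Mapping.lookup p (i,j) - \<rho> i j) + t * (Poly_Mapping.lookup y (i,j) - Poly_Mapping.lookup p (i,j)))^2)"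
      unfolding phi_def by (intro sum.cong refl) (simp only: lookup_add lookup_scaleR_pm, simp add: algebra_simps)
    also have "\<dots> = (\<Sum>i=1..N. \<Sum>j=1..N. (Poly_Mapping.lookup p (i,j) - \<rho> i j)^2 + 2 * t * ((Poly_Mapping.lookup p (i,j) - \<rho> i j) * (Poly_Mapping.lookup y (i,j) - Poly_Mapping.lookup p (i,j))) + t^2 * (Poly_Mapping.lookup y (i,j) - Poly_Mapping.lookup p (i,j))^2)"
      by (intro sum.cong refl) (simp add: power2_eq_square algebra_simps)
    also have "\<dots> = phi N \<rho> p + 2 * t * A + t^2 * B"
      unfolding phi_def A_def B_def by (simp add: sum.distrib sum_distrib_left)
    finally show ?thesis .
  qed
  define t where "t = (if B \<le> - A then 1 else - A / B)"
  have t0: "t > 0" "t \<le> 1" "t * B \<le> - A" using A0 B0 unfolding t_def by (auto simp: field_simps)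
  have "(1 - t) *\<^sub>R p + t *\<^sub>R y \<in> K" using assms(1-3) t0 by (intro convexD) auto
  hence "phi N \<rho> p \<le> phi N \<rho> p + 2 * t * A + t^2 * B" using assms(4) key by metis
  hence "0 \<le> t * (2 * A + t * B)" by (simp add: power2_eq_square algebra_simps)
  moreover have "t * (2 * A + t * B) < 0" using t0 A0 by (intro mult_pos_neg) auto
  ultimately show False by simp
qed



definition vtx :: "nat \<Rightarrow> (nat \<Rightarrow> int) \<Rightarrow> (nat \<times> nat) \<Rightarrow>\<^sub>0 real" where
  "vtx N x = Abs_poly_mapping (\<lambda>(i,j). if i \<in> {1..N} \<and> j \<in> {1..N} then real_of_int (x i * x j) else 0)"

lemma lookup_vtx: "Poly_Mapping.lookup (vtx N x) (i,j) = (if i \<in> {1..N} \<and> j \<in> {1..N} then real_of_int (x i * x j) else 0)"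
proof -
  have "finite {k. (\<lambda>(i,j). if i \<in> {1..N} \<and> j \<in> {1..N} then real_of_int (x i * x j) else 0) k \<noteq> 0}"
    by (rule finite_subset[of _ "{1..N} \<times> {1..N}"]) (auto split: if_splits)
  thus ?thesis unfolding vtx_def by simp
qed

lemma hull_pmf:
  assumes "p \<in> convex hull (vtx N ` sign_vectors N)"
  shows "\<exists>X. unit_field N X \<and> (\<forall>i\<in>{1..N}. \<forall>j\<in>{1..N}. unit_cov_of X i j = Poly_Mapping.lookup p (i,j))"
proof -
  define S where "S = sign_vectors N"
  define T where "T = vtx N ` S"
  have fS: "finite S" unfolding S_def by (rule sv_finite)
  have fT: "finite T" unfolding T_def using fS by simp
  obtain w where w: "\<forall>y\<in>T. 0 \<le> w y" "sum w T = 1" "(\<Sum>y\<in>T. w y *\<^sub>R y) = p"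
    using assms convex_hull_finite[OF fT] unfolding T_def S_def by auto
  define fib where "fib x = {x'\<in>S. vtx N x' = vtx N x}" for x
  define wx where "wx x = (if x \<in> S then w (vtx N x) / real (card (fib x)) else 0)" for x
  have key: "(\<Sum>x\<in>S. wx x * h (vtx N x)) = (\<Sum>y\<in>T. w y * h y)" for h :: "_ \<Rightarrow> real"
  proof -
    have "(\<Sum>x\<in>S. wx x * h (vtx N x)) = (\<Sum>y\<in>T. \<Sum>x\<in>{x. x \<in> S \<and> vtx N x = y}. wx x * h (vtx N x))"
      unfolding T_def by (rule sum.image_gen[OF fS])
    also have "\<dots> = (\<Sum>y\<in>T. w y * h y)"
    proof (intro sum.cong refl)
      fix y assume "y \<in> T"
      then obtain x0 where x0: "x0 \<in> S" "y = vtx N x0" unfolding T_def by auto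
      define F where "F = {x. x \<in> S \<and> vtx N x = y}"
      have fF: "finite F" "F \<noteq> {}" unfolding F_def using fS x0 by auto
      have "(\<Sum>x\<in>F. wx x * h (vtx N x)) = (\<Sum>x\<in>F. w y / real (card F) * h y)"
        by (intro sum.cong refl) (auto simp: F_def wx_def fib_def)
      also have "\<dots> = w y * h y" using fF by simp
      finally show "(\<Sum>x\<in>{x. x \<in> S \<and> vtx N x = y}. wx x * h (vtx N x)) = w y * h y" unfolding F_def .
    qed
    finally show ?thesis .
  qed
  have wx0: "0 \<le> wx x" for x unfolding wx_def T_def using w(1) by (auto simp: T_def)
  have wx1: "(\<Sum>x\<in>S. wx x) = 1" using key[of "\<lambda>_. 1"] w(2) by simp
  have int1: "(\<integral>\<^sup>+x. ennreal (wx x) \<partial>count_space UNIV) = 1"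
  proof -
    have "(\<integral>\<^sup>+x. ennreal (wx x) \<partial>count_space UNIV) = (\<Sum>x\<in>S. ennreal (wx x))"
      by (rule nn_integral_count_space'[OF fS]) (auto simp: wx_def)
    also have "\<dots> = ennreal (\<Sum>x\<in>S. wx x)" using wx0 by simp
    finally show ?thesis using wx1 by simp
  qed
  define X where "X = embed_pmf wx"
  have pX: "pmf X x = wx x" for x unfolding X_def using pmf_embed_pmf[of wx] wx0 int1 by blast
  have sX: "set_pmf X \<subseteq> S" unfolding X_def using set_embed_pmf[of wx] wx0 int1 by (auto simp: wx_def)
  have uf: "unit_field N X" using sX unfolding unit_field_def S_def .
  have "unit_cov_of X i j = Poly_Mapping.lookup p (i,j)" if i: "i \<in> {1..N}" and j: "j \<in> {1..N}" for i j
  proof -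
    have "unit_cov_of X i j = (\<Sum>x\<in>S. real_of_int (x i * x j) * pmf X x)"
      unfolding unit_cov_of_def using sX fS by (intro exp_fin) auto
    also have "\<dots> = (\<Sum>x\<in>S. wx x * Poly_Mapping.lookup (vtx N x) (i,j))"
      using i j by (simp add: pX lookup_vtx mult.commute)
    also have "\<dots> = (\<Sum>y\<in>T. w y * Poly_Mapping.lookup y (i,j))" by (rule key)
    also have "\<dots> = Poly_Mapping.lookup p (i,j)"
      unfolding w(3)[symmetric] lookup_sum by (simp add: lookup_scaleR_pm)
    finally show ?thesis .
  qed
  thus ?thesis using uf by blast
qed



lemma AB_rev:
  assumes HA: "\<And>g. symmetric_mat N g \<Longrightarrow> (\<forall>i\<in>{1..N}. g i i = 0) \<Longrightarrow> (\<forall>e::nat\<Rightarrow>int. (\<Sum>i=1..N. e i) = 1 \<longrightarrow> qform N g e \<le> 0) \<Longrightarrow> supra N g \<in> cone_at (\<lambda>_. 0) (covariograms_supra N)"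
  and sym: "symmetric_mat N \<rho>" and d1: "\<forall>i\<in>{1..N}. \<rho> i i = 1"
  and cond: "\<forall>e\<in>E_set N. qform N \<rho> e \<ge> 1"
  shows "unit_covariance N \<rho>"
proof (rule ccontr)
  assume nuc: "\<not> unit_covariance N \<rho>"
  define S where "S = sign_vectors N"
  define T where "T = vtx N ` S"
  define K where "K = convex hull T"
  have fS: "finite S" unfolding S_def by (rule sv_finite)
  have one: "(\<lambda>i. if i \<in> {1..N} then 1 else 0) \<in> S" unfolding S_def sign_vectors_def by auto
  have "compact K" unfolding K_def T_def using fS by (intro finite_imp_compact_convex_hull) simp
  moreover have "K \<noteq> {}" unfolding K_def T_def using one by auto
  ultimately obtain p where p: "p \<in> K" "\<forall>z\<in>K. phi N \<rho> p \<le> phi N \<rho> z"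
    using continuous_attains_inf[of K "phi N \<rho>"] phi_cont by blast
  have cK: "convex K" unfolding K_def by simp
  define W where "W i j = Poly_Mapping.lookup p (i,j) - \<rho> i j" for i j
  have phi_eq: "phi N \<rho> p = (\<Sum>i=1..N. \<Sum>j=1..N. (W i j)^2)" unfolding phi_def W_def ..
  have "phi N \<rho> p \<noteq> 0"
  proof
    assume "phi N \<rho> p = 0"
    hence "\<forall>i\<in>{1..N}. \<forall>j\<in>{1..N}. (W i j)^2 = 0"
      unfolding phi_eq by (simp add: sum_nonneg_eq_0_iff sum_nonneg)
    hence "\<forall>i\<in>{1..N}. \<forall>j\<in>{1..N}. Poly_Mapping.lookup p (i,j) = \<rho> i j" unfolding W_def by simp
    moreover obtain X where "unit_field N X" "\<forall>i\<in>{1..N}. \<forall>j\<in>{1..N}. unit_cov_of X i j = Poly_Mapping.lookup p (i,j)"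
      using hull_pmf[of p N] p(1) unfolding K_def T_def S_def by blast
    ultimately have "unit_covariance N \<rho>" unfolding unit_covariance_def by auto
    thus False using nuc by simp
  qed
  moreover have "phi N \<rho> p \<ge> 0" unfolding phi_eq by (intro sum_nonneg) auto
  ultimately have phipos: "phi N \<rho> p > 0" by simp
  define F where "F x = (\<Sum>i=1..N. \<Sum>j=1..N. W i j * real_of_int (x i * x j))" for x :: "nat \<Rightarrow> int"
  define c0 where "c0 = (\<Sum>i=1..N. \<Sum>j=1..N. W i j * \<rho> i j)"
  have Fgt: "F x > c0" if "x \<in> S" for x
  proof -
    have "vtx N x \<in> K" unfolding K_def T_def using that by (intro hull_inc) simp
    from var_ineq[OF cK p(1) this p(2)]
    have v: "0 \<le> (\<Sum>i=1..N. \<Sum>j=1..N. W i j * (Poly_Mapping.lookup (vtx N x) (i,j) - Poly_Mapping.lookup p (i,j)))"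
      unfolding W_def .
    have "(\<Sum>i=1..N. \<Sum>j=1..N. W i j * (Poly_Mapping.lookup (vtx N x) (i,j) - Poly_Mapping.lookup p (i,j)))
       = (\<Sum>i=1..N. \<Sum>j=1..N. W i j * (real_of_int (x i * x j) - Poly_Mapping.lookup p (i,j)))"
      by (intro sum.cong refl) (simp add: lookup_vtx)
    hence "0 \<le> (\<Sum>i=1..N. \<Sum>j=1..N. W i j * (real_of_int (x i * x j) - Poly_Mapping.lookup p (i,j)))"
      using v by simp
    also have "\<dots> = F x - (\<Sum>i=1..N. \<Sum>j=1..N. W i j * Poly_Mapping.lookup p (i,j))"
      unfolding F_def by (simp add: sum_subtractf right_diff_distrib)
    finally have a: "(\<Sum>i=1..N. \<Sum>j=1..N. W i j * Poly_Mapping.lookup p (i,j)) \<le> F x" by simp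
    have "(\<Sum>i=1..N. \<Sum>j=1..N. W i j * Poly_Mapping.lookup p (i,j)) - c0 = phi N \<rho> p"
      unfolding c0_def phi_eq by (simp add: sum_subtractf[symmetric] W_def power2_eq_square right_diff_distrib[symmetric])
    thus ?thesis using a phipos by simp
  qed
  obtain x0 where x0: "x0 \<in> S" "\<forall>x\<in>S. F x0 \<le> F x"
  proof -
    have "finite (F ` S)" "F ` S \<noteq> {}" using fS one by auto
    hence "Min (F ` S) \<in> F ` S" "\<forall>a\<in>F ` S. Min (F ` S) \<le> a" by auto
    thus ?thesis using that by auto
  qed
  define u where "u = x0"
  have u1: "u i \<in> {-1,1}" if "i \<in> {1..N}" for i using x0(1) that unfolding u_def S_def sign_vectors_def by auto
  have usq: "u i * u i = 1" if "i \<in> {1..N}" for i using u1[OF that] by auto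
  define g where "g i j = 1/4 - 1/4 * (real_of_int (u i * u j) * \<rho> i j)" for i j
  have symg: "symmetric_mat N g" using sym unfolding symmetric_mat_def g_def by (simp add: mult.commute)
  have dg: "\<forall>i\<in>{1..N}. g i i = 0" unfolding g_def using d1 usq by simp
  have condg: "\<forall>e::nat\<Rightarrow>int. (\<Sum>i=1..N. e i) = 1 \<longrightarrow> qform N g e \<le> 0"
  proof (intro allI impI)
    fix e :: "nat \<Rightarrow> int" assume e1: "(\<Sum>i=1..N. e i) = 1"
    have q1: "qform N g e = 1/4 * (real_of_int (\<Sum>i=1..N. e i))^2 - 1/4 * qform N (\<lambda>i j. real_of_int (u i * u j) * \<rho> i j) e"
      unfolding g_def by (rule qform_affine)
    have q2: "qform N (\<lambda>i j. real_of_int (u i * u j) * \<rho> i j) e = qform N \<rho> (\<lambda>i. u i * e i)"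
      unfolding qform_def by (simp add: algebra_simps)
    have "(\<Sum>i=1..N. u i * (u i * e i)) = (\<Sum>i=1..N. e i)"
      by (intro sum.cong refl) (simp add: mult.assoc[symmetric] usq)
    hence "(\<forall>i\<in>{1..N}. u i \<in> {-1, 1}) \<and> (\<Sum>i=1..N. u i * (u i * e i)) = 1" using u1 e1 by auto
    hence "(\<lambda>i. u i * e i) \<in> E_set N" unfolding E_set_def by blast
    hence "qform N \<rho> (\<lambda>i. u i * e i) \<ge> 1" using cond by auto
    moreover have "(\<Sum>i=1..N. real_of_int (e i)) = 1" using e1 by (metis of_int_1 of_int_sum)
    ultimately show "qform N g e \<le> 0" using q1 q2 by simp
  qed
  obtain t Y where tY: "t \<ge> 0" "random_subset N Y" "\<forall>i\<in>{1..N}. \<forall>j\<in>{1..N}. g i j = t * covariogram Y i j"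
    using cone_entries[OF HA[OF symg dg condg] symg dg] by blast
  define W' where "W' i j = real_of_int (u i * u j) * W i j" for i j
  define G where "G = (\<Sum>i=1..N. \<Sum>j=1..N. W' i j * g i j)"
  have "G = (\<Sum>i=1..N. \<Sum>j=1..N. 1/4 * (W i j * real_of_int (u i * u j)) - 1/4 * (W i j * \<rho> i j))"
    unfolding G_def
  proof (intro sum.cong refl)
    fix i j assume i: "i \<in> {1..N}" and j: "j \<in> {1..N}"
    have "real_of_int (u i * u j) * real_of_int (u i * u j) = 1"
      using usq[OF i] usq[OF j] by (metis mult.commute mult.left_commute mult_1 of_int_1 of_int_mult)
    thus "W' i j * g i j = 1/4 * (W i j * real_of_int (u i * u j)) - 1/4 * (W i j * \<rho> i j)"
      unfolding W'_def g_def by (simp add: algebra_simps)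
  qed
  also have "\<dots> = 1/4 * (F u - c0)"
    unfolding F_def c0_def by (simp add: sum_subtractf sum_distrib_left right_diff_distrib)
  finally have Gpos: "G > 0" using Fgt[OF x0(1)] unfolding u_def by simp
  have "G = t * (\<Sum>i=1..N. \<Sum>j=1..N. W' i j * covariogram Y i j)"
    unfolding G_def sum_distrib_left using tY(3) by (intro sum.cong refl) auto
  also have "(\<Sum>i=1..N. \<Sum>j=1..N. W' i j * covariogram Y i j) \<le> 0"
    unfolding cov_lin[OF tY(2)]
  proof (intro sum_nonpos mult_nonneg_nonpos)
    fix A :: "nat set"
    define y where "y i = u i * sv N A i" for i
    have yS: "y \<in> S" unfolding S_def sign_vectors_def y_def using u1 by (auto simp: sv_def) force+
    have "(\<Sum>i=1..N. \<Sum>j=1..N. W' i j * (1 - real_of_int (sv N A i * sv N A j))) = F u - F y"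
      unfolding F_def W'_def y_def by (simp add: sum_subtractf[symmetric] algebra_simps)
    thus "(\<Sum>i=1..N. \<Sum>j=1..N. W' i j * (1 - real_of_int (sv N A i * sv N A j))) / 4 \<le> 0"
      using x0(2) yS unfolding u_def by simp
  qed simp
  hence "t * (\<Sum>i=1..N. \<Sum>j=1..N. W' i j * covariogram Y i j) \<le> 0" using tY(1) by (simp add: mult_nonneg_nonpos)
  finally show False using Gpos by simp
qed


theorem theorem2:
  fixes N :: nat
  assumes "N \<ge> 1"
  shows "(\<forall>\<gamma>. symmetric_mat N \<gamma> \<and> (\<forall>i\<in>{1..N}. \<gamma> i i = 0) \<longrightarrow>
            (supra N \<gamma> \<in> cone_at (\<lambda>_. 0) (covariograms_supra N) \<longleftrightarrow>
             (\<forall>e::nat \<Rightarrow> int. (\<Sum>i=1..N. e i) = 1 \<longrightarrow> qform N \<gamma> e \<le> 0)))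
       \<longleftrightarrow>
         (\<forall>\<rho>. symmetric_mat N \<rho> \<and> (\<forall>i\<in>{1..N}. \<rho> i i = 1) \<longrightarrow>
            (unit_covariance N \<rho> \<longleftrightarrow> (\<forall>e\<in>E_set N. qform N \<rho> e \<ge> 1)))"
proof
  assume A: "\<forall>\<gamma>. symmetric_mat N \<gamma> \<and> (\<forall>i\<in>{1..N}. \<gamma> i i = 0) \<longrightarrow>
            (supra N \<gamma> \<in> cone_at (\<lambda>_. 0) (covariograms_supra N) \<longleftrightarrow>
             (\<forall>e::nat \<Rightarrow> int. (\<Sum>i=1..N. e i) = 1 \<longrightarrow> qform N \<gamma> e \<le> 0))"
  show "\<forall>\<rho>. symmetric_mat N \<rho> \<and> (\<forall>i\<in>{1..N}. \<rho> i i = 1) \<longrightarrow>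
            (unit_covariance N \<rho> \<longleftrightarrow> (\<forall>e\<in>E_set N. qform N \<rho> e \<ge> 1))"
  proof (intro allI impI iffI ballI)
    fix \<rho> e assume "symmetric_mat N \<rho> \<and> (\<forall>i\<in>{1..N}. \<rho> i i = 1)" "unit_covariance N \<rho>" "e \<in> E_set N"
    thus "1 \<le> qform N \<rho> e" using B_fwd by blast
  next
    fix \<rho> assume h: "symmetric_mat N \<rho> \<and> (\<forall>i\<in>{1..N}. \<rho> i i = 1)" "\<forall>e\<in>E_set N. 1 \<le> qform N \<rho> e"
    show "unit_covariance N \<rho>"
    proof (rule AB_rev)
      fix g assume "symmetric_mat N g" "\<forall>i\<in>{1..N}. g i i = 0" "\<forall>e::nat\<Rightarrow>int. (\<Sum>i=1..N. e i) = 1 \<longrightarrow> qform N g e \<le> 0"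
      thus "supra N g \<in> cone_at (\<lambda>_. 0) (covariograms_supra N)" using A by blast
    qed (use h in auto)
  qed
next
  assume B: "\<forall>\<rho>. symmetric_mat N \<rho> \<and> (\<forall>i\<in>{1..N}. \<rho> i i = 1) \<longrightarrow>
            (unit_covariance N \<rho> \<longleftrightarrow> (\<forall>e\<in>E_set N. qform N \<rho> e \<ge> 1))"
  show "\<forall>\<gamma>. symmetric_mat N \<gamma> \<and> (\<forall>i\<in>{1..N}. \<gamma> i i = 0) \<longrightarrow>
            (supra N \<gamma> \<in> cone_at (\<lambda>_. 0) (covariograms_supra N) \<longleftrightarrow>
             (\<forall>e::nat \<Rightarrow> int. (\<Sum>i=1..N. e i) = 1 \<longrightarrow> qform N \<gamma> e \<le> 0))"
  proof (intro allI impI iffI)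
    fix g and e :: "nat \<Rightarrow> int" assume "symmetric_mat N g \<and> (\<forall>i\<in>{1..N}. g i i = 0)" "supra N g \<in> cone_at (\<lambda>_. 0) (covariograms_supra N)"
      "(\<Sum>i=1..N. e i) = 1"
    thus "qform N g e \<le> 0" using A_fwd by blast
  next
    fix g assume h: "symmetric_mat N g \<and> (\<forall>i\<in>{1..N}. g i i = 0)" "\<forall>e::nat\<Rightarrow>int. (\<Sum>i=1..N. e i) = 1 \<longrightarrow> qform N g e \<le> 0"
    show "supra N g \<in> cone_at (\<lambda>_. 0) (covariograms_supra N)"
    proof (rule BA_rev[OF assms])
      fix \<rho> assume "symmetric_mat N \<rho>" "\<forall>i\<in>{1..N}. \<rho> i i = 1" "\<forall>e\<in>E_set N. 1 \<le> qform N \<rho> e"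
      thus "unit_covariance N \<rho>" using B by blast
    qed (use h in auto)
  qed
qed

end
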